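(* Let $\mathcal T$ be a triangulated category and $\mathcal T^{\le0}$, $\mathcal T^{\ge0}$ full subcategories such that, for every distinguished triangle $X'\to X\to X''\xrightarrow{+1}$, if $X'$ and $X''$ belong to $\mathcal T^{\le0}$ (resp. $\mathcal T^{\ge0}$) then so does $X$. Let $M_1\to M\to M_2\xrightarrow{+1}$ be a distinguished triangle, and suppose one of the following holds: (i) $M_1\in\mathcal T^{<0}$ and there is a distinguished triangle $M_2'\to M_2\to M_2''\xrightarrow{+1}$ with $M_2'\in\mathcal T^{<0}$, $M_2''\in\mathcal T^{\ge0}$; (ii) $M_2\in\mathcal T^{\ge0}$ and there is a distinguished triangle $M_1'\to M_1\to M_1''\xrightarrow{+1}$ with $M_1'\in\mathcal T^{<0}$, $M_1''\in\mathcal T^{\ge0}$. Then there exists a distinguished triangle $M'\to M\to M''\xrightarrow{+1}$ with $M'\in\mathcal T^{<0}$ and $M''\in\mathcal T^{\ge0}$.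
   Context: $\mathcal T^{<0}$ denotes the full subcategory $\mathcal T^{\le0}[1]=\{X[1]:X\in\mathcal T^{\le0}\}$ (closed under isomorphism). *)

theory Defs
  imports Main
begin

text \<open>Objects have type 'o, morphisms
type 'm; Hom X Y is the set of morphisms X \<rightarrow> Y; comp g f is g \<circ> f.
Each Hom set is an abelian group (add, neg, zer); there is a zero object and binary
biproducts (additive category); shO/shM is the shift functor [1], required to be an
additive auto-equivalence; dist is the class of distinguished triangles
(X, Y, Z, f, g, h) meaning X -f-> Y -g-> Z -h-> X[1], subject to TR1--TR4.\<close>

record ('o, 'm) tcat =
  Ob   :: "'o set"
  Hom  :: "'o \<Rightarrow> 'o \<Rightarrow> 'm set"
  comp :: "'m \<Rightarrow> 'm \<Rightarrow> 'm"
  idm  :: "'o \<Rightarrow> 'm"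
  add  :: "'m \<Rightarrow> 'm \<Rightarrow> 'm"
  neg  :: "'m \<Rightarrow> 'm"
  zer  :: "'o \<Rightarrow> 'o \<Rightarrow> 'm"
  shO  :: "'o \<Rightarrow> 'o"
  shM  :: "'m \<Rightarrow> 'm"
  dist :: "('o \<times> 'o \<times> 'o \<times> 'm \<times> 'm \<times> 'm) set"

definition is_category :: "('o, 'm, 'x) tcat_scheme \<Rightarrow> bool" where
  "is_category C \<longleftrightarrow>
     (\<forall>X\<in>Ob C. \<forall>Y\<in>Ob C. \<forall>Z\<in>Ob C. \<forall>f\<in>Hom C X Y. \<forall>g\<in>Hom C Y Z.
         comp C g f \<in> Hom C X Z) \<and>
     (\<forall>X\<in>Ob C. idm C X \<in> Hom C X X) \<and>
     (\<forall>X\<in>Ob C. \<forall>Y\<in>Ob C. \<forall>f\<in>Hom C X Y.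
         comp C f (idm C X) = f \<and> comp C (idm C Y) f = f) \<and>
     (\<forall>W\<in>Ob C. \<forall>X\<in>Ob C. \<forall>Y\<in>Ob C. \<forall>Z\<in>Ob C.
       \<forall>f\<in>Hom C W X. \<forall>g\<in>Hom C X Y. \<forall>h\<in>Hom C Y Z.
         comp C h (comp C g f) = comp C (comp C h g) f)"

definition is_preadditive :: "('o, 'm, 'x) tcat_scheme \<Rightarrow> bool" where
  "is_preadditive C \<longleftrightarrow>
     (\<forall>X\<in>Ob C. \<forall>Y\<in>Ob C.
        zer C X Y \<in> Hom C X Y \<and>
        (\<forall>f\<in>Hom C X Y. \<forall>g\<in>Hom C X Y. add C f g \<in> Hom C X Y) \<and>
        (\<forall>f\<in>Hom C X Y. neg C f \<in> Hom C X Y) \<and>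
        (\<forall>f\<in>Hom C X Y. \<forall>g\<in>Hom C X Y. \<forall>h\<in>Hom C X Y.
            add C (add C f g) h = add C f (add C g h)) \<and>
        (\<forall>f\<in>Hom C X Y. \<forall>g\<in>Hom C X Y. add C f g = add C g f) \<and>
        (\<forall>f\<in>Hom C X Y. add C f (zer C X Y) = f) \<and>
        (\<forall>f\<in>Hom C X Y. add C f (neg C f) = zer C X Y)) \<and>
     (\<forall>X\<in>Ob C. \<forall>Y\<in>Ob C. \<forall>Z\<in>Ob C.
        (\<forall>f\<in>Hom C X Y. \<forall>g\<in>Hom C Y Z. \<forall>g'\<in>Hom C Y Z.
            comp C (add C g g') f = add C (comp C g f) (comp C g' f)) \<and>
        (\<forall>f\<in>Hom C X Y. \<forall>f'\<in>Hom C X Y. \<forall>g\<in>Hom C Y Z.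
            comp C g (add C f f') = add C (comp C g f) (comp C g f')))"

definition zero_obj :: "('o, 'm, 'x) tcat_scheme \<Rightarrow> 'o \<Rightarrow> bool" where
  "zero_obj C Z \<longleftrightarrow> Z \<in> Ob C \<and>
     (\<forall>X\<in>Ob C. Hom C Z X = {zer C Z X} \<and> Hom C X Z = {zer C X Z})"

definition is_additive :: "('o, 'm, 'x) tcat_scheme \<Rightarrow> bool" where
  "is_additive C \<longleftrightarrow> is_category C \<and> is_preadditive C \<and>
     (\<exists>Z. zero_obj C Z) \<and>
     (\<forall>X\<in>Ob C. \<forall>Y\<in>Ob C. \<exists>P\<in>Ob C.
        \<exists>i1\<in>Hom C X P. \<exists>i2\<in>Hom C Y P. \<exists>p1\<in>Hom C P X. \<exists>p2\<in>Hom C P Y.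
          comp C p1 i1 = idm C X \<and> comp C p2 i2 = idm C Y \<and>
          comp C p1 i2 = zer C Y X \<and> comp C p2 i1 = zer C X Y \<and>
          add C (comp C i1 p1) (comp C i2 p2) = idm C P)"

definition iso_mor :: "('o, 'm, 'x) tcat_scheme \<Rightarrow> 'm \<Rightarrow> 'o \<Rightarrow> 'o \<Rightarrow> bool" where
  "iso_mor C f X Y \<longleftrightarrow> f \<in> Hom C X Y \<and>
     (\<exists>g\<in>Hom C Y X. comp C g f = idm C X \<and> comp C f g = idm C Y)"

definition shift_ok :: "('o, 'm, 'x) tcat_scheme \<Rightarrow> bool" where
  "shift_ok C \<longleftrightarrow>
     (\<forall>X\<in>Ob C. shO C X \<in> Ob C) \<and>
     (\<forall>X\<in>Ob C. \<forall>Y\<in>Ob C. bij_betw (shM C) (Hom C X Y) (Hom C (shO C X) (shO C Y))) \<and>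
     (\<forall>X\<in>Ob C. shM C (idm C X) = idm C (shO C X)) \<and>
     (\<forall>X\<in>Ob C. \<forall>Y\<in>Ob C. \<forall>Z\<in>Ob C. \<forall>f\<in>Hom C X Y. \<forall>g\<in>Hom C Y Z.
        shM C (comp C g f) = comp C (shM C g) (shM C f)) \<and>
     (\<forall>X\<in>Ob C. \<forall>Y\<in>Ob C. \<forall>f\<in>Hom C X Y. \<forall>g\<in>Hom C X Y.
        shM C (add C f g) = add C (shM C f) (shM C g)) \<and>
     (\<forall>Y\<in>Ob C. \<exists>X\<in>Ob C. \<exists>u. iso_mor C u (shO C X) Y)"

definition triangle :: "('o, 'm, 'x) tcat_scheme \<Rightarrow> 'o \<times> 'o \<times> 'o \<times> 'm \<times> 'm \<times> 'm \<Rightarrow> bool" where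
  "triangle C T \<longleftrightarrow> (case T of (X, Y, Z, f, g, h) \<Rightarrow>
     X \<in> Ob C \<and> Y \<in> Ob C \<and> Z \<in> Ob C \<and>
     f \<in> Hom C X Y \<and> g \<in> Hom C Y Z \<and> h \<in> Hom C Z (shO C X))"

definition tri_mor :: "('o, 'm, 'x) tcat_scheme \<Rightarrow> 'o \<times> 'o \<times> 'o \<times> 'm \<times> 'm \<times> 'm
     \<Rightarrow> 'o \<times> 'o \<times> 'o \<times> 'm \<times> 'm \<times> 'm \<Rightarrow> 'm \<Rightarrow> 'm \<Rightarrow> 'm \<Rightarrow> bool" where
  "tri_mor C T T' a b c \<longleftrightarrow> (case T of (X, Y, Z, f, g, h) \<Rightarrow> case T' of (X', Y', Z', f', g', h') \<Rightarrow>
     a \<in> Hom C X X' \<and> b \<in> Hom C Y Y' \<and> c \<in> Hom C Z Z' \<and>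
     comp C b f = comp C f' a \<and> comp C c g = comp C g' b \<and>
     comp C (shM C a) h = comp C h' c)"

definition triangulated :: "('o, 'm, 'x) tcat_scheme \<Rightarrow> bool" where
  "triangulated C \<longleftrightarrow> is_additive C \<and> shift_ok C \<and>
     \<comment> \<open>distinguished triangles are triangles\<close>
     (\<forall>T\<in>dist C. triangle C T) \<and>
     \<comment> \<open>TR1: closure under isomorphism\<close>
     (\<forall>T T' a b c. T \<in> dist C \<and> triangle C T' \<and> tri_mor C T T' a b c \<and>
        iso_mor C a (fst T) (fst T') \<and> iso_mor C b (fst (snd T)) (fst (snd T')) \<and>
        iso_mor C c (fst (snd (snd T))) (fst (snd (snd T'))) \<longrightarrow> T' \<in> dist C) \<and>
     \<comment> \<open>TR1: X --id--> X --> 0 --> X[1]\<close>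
     (\<forall>X\<in>Ob C. \<forall>Z. zero_obj C Z \<longrightarrow>
        (X, X, Z, idm C X, zer C X Z, zer C Z (shO C X)) \<in> dist C) \<and>
     \<comment> \<open>TR1: every morphism embeds in a distinguished triangle\<close>
     (\<forall>X\<in>Ob C. \<forall>Y\<in>Ob C. \<forall>f\<in>Hom C X Y. \<exists>Z g h. (X, Y, Z, f, g, h) \<in> dist C) \<and>
     \<comment> \<open>TR2: rotation\<close>
     (\<forall>X Y Z f g h. triangle C (X, Y, Z, f, g, h) \<longrightarrow>
        ((X, Y, Z, f, g, h) \<in> dist C \<longleftrightarrow>
         (Y, Z, shO C X, g, h, neg C (shM C f)) \<in> dist C)) \<and>
     \<comment> \<open>TR3: completion of morphisms\<close>
     (\<forall>X Y Z f g h X' Y' Z' f' g' h' a b.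
        (X, Y, Z, f, g, h) \<in> dist C \<and> (X', Y', Z', f', g', h') \<in> dist C \<and>
        a \<in> Hom C X X' \<and> b \<in> Hom C Y Y' \<and> comp C b f = comp C f' a \<longrightarrow>
        (\<exists>c. tri_mor C (X, Y, Z, f, g, h) (X', Y', Z', f', g', h') a b c)) \<and>
     \<comment> \<open>TR4: octahedral axiom\<close>
     (\<forall>X Y Z f g Z' u h X' v k Y' w l.
        f \<in> Hom C X Y \<and> g \<in> Hom C Y Z \<and>
        (X, Y, Z', f, u, h) \<in> dist C \<and> (Y, Z, X', g, v, k) \<in> dist C \<and>
        (X, Z, Y', comp C g f, w, l) \<in> dist C \<longrightarrow>
        (\<exists>a b. (Z', Y', X', a, b, comp C (shM C u) k) \<in> dist C \<and>
           comp C a u = comp C w g \<and> comp C l a = h \<and>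
           comp C b w = v \<and> comp C k b = comp C (shM C f) l))"

text \<open>T^{<0} = T^{\<le>0}[1], closed under isomorphism.\<close>
definition lt0 :: "('o, 'm, 'x) tcat_scheme \<Rightarrow> 'o set \<Rightarrow> 'o set" where
  "lt0 C A = {Y \<in> Ob C. \<exists>X\<in>A. \<exists>u. iso_mor C u (shO C X) Y}"

end

theory Submission
  imports Defs
begin

lemma T_add: "triangulated C \<Longrightarrow> is_additive C"
  unfolding triangulated_def by blast
lemma T_cat: "triangulated C \<Longrightarrow> is_category C"
  unfolding triangulated_def is_additive_def by blast
lemma T_pre: "triangulated C \<Longrightarrow> is_preadditive C"
  unfolding triangulated_def is_additive_def by blast
lemma T_shift: "triangulated C \<Longrightarrow> shift_ok C"
  unfolding triangulated_def by blast

lemma T_dt: "triangulated C \<Longrightarrow> \<forall>T\<in>dist C. triangle C T"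
  unfolding triangulated_def by (elim conjE) assumption
lemma T_tri: "triangulated C \<Longrightarrow> (X,Y,Z,f,g,h) \<in> dist C \<Longrightarrow>
   X \<in> Ob C \<and> Y \<in> Ob C \<and> Z \<in> Ob C \<and> f \<in> Hom C X Y \<and> g \<in> Hom C Y Z \<and> h \<in> Hom C Z (shO C X)"
  using T_dt[of C] unfolding triangle_def by fastforce

lemma T_isoA: "triangulated C \<Longrightarrow> (\<forall>T T' a b c. T \<in> dist C \<and> triangle C T' \<and> tri_mor C T T' a b c \<and>
        iso_mor C a (fst T) (fst T') \<and> iso_mor C b (fst (snd T)) (fst (snd T')) \<and>
        iso_mor C c (fst (snd (snd T))) (fst (snd (snd T'))) \<longrightarrow> T' \<in> dist C)"
  unfolding triangulated_def by (elim conjE) assumption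
lemma T_iso: "triangulated C \<Longrightarrow> T \<in> dist C \<Longrightarrow> triangle C T' \<Longrightarrow> tri_mor C T T' a b c \<Longrightarrow>
    iso_mor C a (fst T) (fst T') \<Longrightarrow> iso_mor C b (fst (snd T)) (fst (snd T')) \<Longrightarrow>
    iso_mor C c (fst (snd (snd T))) (fst (snd (snd T'))) \<Longrightarrow> T' \<in> dist C"
  using T_isoA by blast

lemma T_exA: "triangulated C \<Longrightarrow> (\<forall>X\<in>Ob C. \<forall>Y\<in>Ob C. \<forall>f\<in>Hom C X Y. \<exists>Z g h. (X, Y, Z, f, g, h) \<in> dist C)"
  unfolding triangulated_def by (elim conjE) assumption
lemma T_ex: "triangulated C \<Longrightarrow> X \<in> Ob C \<Longrightarrow> Y \<in> Ob C \<Longrightarrow> f \<in> Hom C X Y \<Longrightarrow>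
   \<exists>Z g h. (X, Y, Z, f, g, h) \<in> dist C"
  using T_exA by blast

lemma T_rotA: "triangulated C \<Longrightarrow> (\<forall>X Y Z f g h. triangle C (X, Y, Z, f, g, h) \<longrightarrow>
        ((X, Y, Z, f, g, h) \<in> dist C \<longleftrightarrow>
         (Y, Z, shO C X, g, h, neg C (shM C f)) \<in> dist C))"
  unfolding triangulated_def by (elim conjE) assumption
lemma T_rot: "triangulated C \<Longrightarrow> triangle C (X, Y, Z, f, g, h) \<Longrightarrow>
        ((X, Y, Z, f, g, h) \<in> dist C \<longleftrightarrow>
         (Y, Z, shO C X, g, h, neg C (shM C f)) \<in> dist C)"
  using T_rotA by blast

lemma T_octA: "triangulated C \<Longrightarrow> (\<forall>X Y Z f g Z' u h X' v k Y' w l.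
        f \<in> Hom C X Y \<and> g \<in> Hom C Y Z \<and>
        (X, Y, Z', f, u, h) \<in> dist C \<and> (Y, Z, X', g, v, k) \<in> dist C \<and>
        (X, Z, Y', comp C g f, w, l) \<in> dist C \<longrightarrow>
        (\<exists>a b. (Z', Y', X', a, b, comp C (shM C u) k) \<in> dist C \<and>
           comp C a u = comp C w g \<and> comp C l a = h \<and>
           comp C b w = v \<and> comp C k b = comp C (shM C f) l))"
  unfolding triangulated_def by (elim conjE) assumption
lemma T_oct: "triangulated C \<Longrightarrow>
        f \<in> Hom C X Y \<Longrightarrow> g \<in> Hom C Y Z \<Longrightarrow>
        (X, Y, Z', f, u, h) \<in> dist C \<Longrightarrow> (Y, Z, X', g, v, k) \<in> dist C \<Longrightarrow>
        (X, Z, Y', comp C g f, w, l) \<in> dist C \<Longrightarrow>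
        (\<exists>a b. (Z', Y', X', a, b, comp C (shM C u) k) \<in> dist C)"
proof -
  assume "triangulated C" "f \<in> Hom C X Y" "g \<in> Hom C Y Z"
        "(X, Y, Z', f, u, h) \<in> dist C" "(Y, Z, X', g, v, k) \<in> dist C"
        "(X, Z, Y', comp C g f, w, l) \<in> dist C"
  then show ?thesis using T_octA[of C] by blast
qed

context
  fixes C :: "('o, 'm, 'x) tcat_scheme"
begin

lemma c_comp: "is_category C \<Longrightarrow> X \<in> Ob C \<Longrightarrow> Y \<in> Ob C \<Longrightarrow> Z \<in> Ob C \<Longrightarrow>
   f \<in> Hom C X Y \<Longrightarrow> g \<in> Hom C Y Z \<Longrightarrow> comp C g f \<in> Hom C X Z"
  unfolding is_category_def by blast
lemma c_id: "is_category C \<Longrightarrow> X \<in> Ob C \<Longrightarrow> idm C X \<in> Hom C X X"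
  unfolding is_category_def by blast
lemma c_idr: "is_category C \<Longrightarrow> X \<in> Ob C \<Longrightarrow> Y \<in> Ob C \<Longrightarrow> f \<in> Hom C X Y \<Longrightarrow> comp C f (idm C X) = f"
  unfolding is_category_def by blast
lemma c_idl: "is_category C \<Longrightarrow> X \<in> Ob C \<Longrightarrow> Y \<in> Ob C \<Longrightarrow> f \<in> Hom C X Y \<Longrightarrow> comp C (idm C Y) f = f"
  unfolding is_category_def by blast
lemma c_assoc: "is_category C \<Longrightarrow> W \<in> Ob C \<Longrightarrow> X \<in> Ob C \<Longrightarrow> Y \<in> Ob C \<Longrightarrow> Z \<in> Ob C \<Longrightarrow>
   f \<in> Hom C W X \<Longrightarrow> g \<in> Hom C X Y \<Longrightarrow> h \<in> Hom C Y Z \<Longrightarrow>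
   comp C h (comp C g f) = comp C (comp C h g) f"
  unfolding is_category_def by blast

lemma p_zer: "is_preadditive C \<Longrightarrow> X \<in> Ob C \<Longrightarrow> Y \<in> Ob C \<Longrightarrow> zer C X Y \<in> Hom C X Y"
  unfolding is_preadditive_def by blast
lemma p_neg: "is_preadditive C \<Longrightarrow> X \<in> Ob C \<Longrightarrow> Y \<in> Ob C \<Longrightarrow> f \<in> Hom C X Y \<Longrightarrow> neg C f \<in> Hom C X Y"
  unfolding is_preadditive_def by blast
lemma p_add: "is_preadditive C \<Longrightarrow> X \<in> Ob C \<Longrightarrow> Y \<in> Ob C \<Longrightarrow> f \<in> Hom C X Y \<Longrightarrow> g \<in> Hom C X Y \<Longrightarrow> add C f g \<in> Hom C X Y"
  unfolding is_preadditive_def by blast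
lemma p_assoc: "is_preadditive C \<Longrightarrow> X \<in> Ob C \<Longrightarrow> Y \<in> Ob C \<Longrightarrow> f \<in> Hom C X Y \<Longrightarrow> g \<in> Hom C X Y \<Longrightarrow> h \<in> Hom C X Y \<Longrightarrow>
   add C (add C f g) h = add C f (add C g h)"
  unfolding is_preadditive_def by blast
lemma p_comm: "is_preadditive C \<Longrightarrow> X \<in> Ob C \<Longrightarrow> Y \<in> Ob C \<Longrightarrow> f \<in> Hom C X Y \<Longrightarrow> g \<in> Hom C X Y \<Longrightarrow>
   add C f g = add C g f"
  unfolding is_preadditive_def by blast
lemma p_z: "is_preadditive C \<Longrightarrow> X \<in> Ob C \<Longrightarrow> Y \<in> Ob C \<Longrightarrow> f \<in> Hom C X Y \<Longrightarrow> add C f (zer C X Y) = f"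
  unfolding is_preadditive_def by blast
lemma p_inv: "is_preadditive C \<Longrightarrow> X \<in> Ob C \<Longrightarrow> Y \<in> Ob C \<Longrightarrow> f \<in> Hom C X Y \<Longrightarrow> add C f (neg C f) = zer C X Y"
  unfolding is_preadditive_def by blast

lemma sh_ob: "shift_ok C \<Longrightarrow> X \<in> Ob C \<Longrightarrow> shO C X \<in> Ob C"
  unfolding shift_ok_def by blast
lemma sh_bij: "shift_ok C \<Longrightarrow> X \<in> Ob C \<Longrightarrow> Y \<in> Ob C \<Longrightarrow> bij_betw (shM C) (Hom C X Y) (Hom C (shO C X) (shO C Y))"
  unfolding shift_ok_def by blast
lemma sh_id: "shift_ok C \<Longrightarrow> X \<in> Ob C \<Longrightarrow> shM C (idm C X) = idm C (shO C X)"
  unfolding shift_ok_def by blast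
lemma sh_ess: "shift_ok C \<Longrightarrow> Y \<in> Ob C \<Longrightarrow> \<exists>X\<in>Ob C. \<exists>u. iso_mor C u (shO C X) Y"
  unfolding shift_ok_def by blast

lemma neg_neg:
  assumes p: "is_preadditive C" and o: "X \<in> Ob C" "Y \<in> Ob C" and x: "x \<in> Hom C X Y"
  shows "neg C (neg C x) = x"
proof -
  let ?y = "neg C x"
  have y: "?y \<in> Hom C X Y" and ny: "neg C ?y \<in> Hom C X Y" and z: "zer C X Y \<in> Hom C X Y"
    using p_neg[OF p o] p_zer[OF p o] x by blast+
  have "x = add C x (zer C X Y)" using p_z[OF p o x] by simp
  also have "\<dots> = add C x (add C ?y (neg C ?y))" using p_inv[OF p o y] by simp
  also have "\<dots> = add C (add C x ?y) (neg C ?y)" using p_assoc[OF p o x y ny] by simp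
  also have "\<dots> = add C (zer C X Y) (neg C ?y)" using p_inv[OF p o x] by simp
  also have "\<dots> = add C (neg C ?y) (zer C X Y)" using p_comm[OF p o z ny] by simp
  also have "\<dots> = neg C ?y" using p_z[OF p o ny] by simp
  finally show ?thesis by simp
qed

end

lemma back_rot:
  assumes tri: "triangulated C" and d: "(A,B,D,\<alpha>,\<beta>,\<gamma>) \<in> dist C" and X: "X \<in> Ob C"
    and u: "iso_mor C u (shO C X) D"
  shows "\<exists>f \<beta>'. (X,A,B,f,\<alpha>,\<beta>') \<in> dist C"
proof -
  have cat: "is_category C" and pre: "is_preadditive C" and sh: "shift_ok C"
    using tri T_cat T_pre T_shift by blast+
  have ob: "A \<in> Ob C" "B \<in> Ob C" "D \<in> Ob C" and ms: "\<alpha> \<in> Hom C A B" "\<beta> \<in> Hom C B D"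
    "\<gamma> \<in> Hom C D (shO C A)" using T_tri[OF tri d] by auto
  have XO: "shO C X \<in> Ob C" "shO C A \<in> Ob C" using sh_ob[OF sh] X ob by auto
  obtain v where v: "v \<in> Hom C D (shO C X)" "comp C v u = idm C (shO C X)" "comp C u v = idm C D"
    and uh: "u \<in> Hom C (shO C X) D"
    using u unfolding iso_mor_def by blast
  have vb: "comp C v \<beta> \<in> Hom C B (shO C X)" using c_comp[OF cat] ob XO ms v by blast
  have gu: "comp C \<gamma> u \<in> Hom C (shO C X) (shO C A)" using c_comp[OF cat] ob XO ms uh by blast
  have idA: "idm C A \<in> Hom C A A" and idB: "idm C B \<in> Hom C B B"
    using c_id[OF cat] ob by blast+
  have e1: "comp C (idm C B) \<alpha> = comp C \<alpha> (idm C A)" using c_idl[OF cat] c_idr[OF cat] ob ms by metis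
  have e2: "comp C v \<beta> = comp C (comp C v \<beta>) (idm C B)" using c_idr[OF cat] ob XO vb by metis
  have shid: "shM C (idm C A) = idm C (shO C A)" using sh_id[OF sh] ob by blast
  have "comp C (comp C \<gamma> u) v = comp C \<gamma> (comp C u v)"
    using c_assoc[OF cat, of D "shO C X" D "shO C A" v u \<gamma>] ob XO ms v uh by simp
  also have "\<dots> = \<gamma>" using c_idr[OF cat] ob XO ms v by metis
  finally have e3: "comp C (shM C (idm C A)) \<gamma> = comp C (comp C \<gamma> u) v"
    using shid c_idl[OF cat] ob XO ms by metis
  have isoA: "iso_mor C (idm C A) A A" using idA c_idl[OF cat] ob unfolding iso_mor_def by metis
  have isoB: "iso_mor C (idm C B) B B" using idB c_idl[OF cat] ob unfolding iso_mor_def by metis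
  have isoV: "iso_mor C v D (shO C X)" using v uh unfolding iso_mor_def by blast
  have d2: "(A,B,shO C X,\<alpha>,comp C v \<beta>,comp C \<gamma> u) \<in> dist C"
    apply (rule T_iso[OF tri d _ _ ])
    using ob XO ms vb gu idA idB v e1 e2 e3 isoA isoB isoV
    by (auto simp: triangle_def tri_mor_def)
  have "neg C (comp C \<gamma> u) \<in> Hom C (shO C X) (shO C A)" using p_neg[OF pre] XO gu by blast
  moreover have "bij_betw (shM C) (Hom C X A) (Hom C (shO C X) (shO C A))"
    using sh_bij[OF sh] X ob by blast
  ultimately obtain f where f: "f \<in> Hom C X A" "shM C f = neg C (comp C \<gamma> u)"
    unfolding bij_betw_def by (metis imageE)
  have nn: "neg C (shM C f) = comp C \<gamma> u" using f neg_neg[OF pre XO gu] by simp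
  have "triangle C (X,A,B,f,\<alpha>,comp C v \<beta>)" using X ob f ms vb by (simp add: triangle_def)
  hence "(X,A,B,f,\<alpha>,comp C v \<beta>) \<in> dist C" using T_rot[OF tri] d2 nn by simp
  thus ?thesis by blast
qed

lemma lt0_ext:
  assumes tri: "triangulated C" and K: "K \<subseteq> Ob C"
    and ext: "\<forall>X' X X'' f g h. (X', X, X'', f, g, h) \<in> dist C \<longrightarrow>
                  X' \<in> K \<longrightarrow> X'' \<in> K \<longrightarrow> X \<in> K"
    and d: "(P,Q,R,\<alpha>,\<beta>,\<gamma>) \<in> dist C" and P: "P \<in> lt0 C K" and R: "R \<in> lt0 C K"
  shows "Q \<in> lt0 C K"
proof -
  obtain X1 u1 where X1: "X1 \<in> K" "iso_mor C u1 (shO C X1) P" using P unfolding lt0_def by blast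
  obtain X3 u3 where X3: "X3 \<in> K" "iso_mor C u3 (shO C X3) R" using R unfolding lt0_def by blast
  have Q: "Q \<in> Ob C" using T_tri[OF tri d] by auto
  obtain Y u where Y: "Y \<in> Ob C" "iso_mor C u (shO C Y) Q"
    using sh_ess[OF T_shift[OF tri] Q] by blast
  obtain f1 b1 where d1: "(X3,P,Q,f1,\<alpha>,b1) \<in> dist C" using back_rot[OF tri d _ X3(2)] X3 K by blast
  obtain f2 b2 where d2: "(Y,X3,P,f2,f1,b2) \<in> dist C" using back_rot[OF tri d1 Y(1) Y(2)] by blast
  obtain f3 b3 where d3: "(X1,Y,X3,f3,f2,b3) \<in> dist C" using back_rot[OF tri d2 _ X1(2)] X1 K by blast
  have "Y \<in> K" using ext d3 X1 X3 by blast
  thus ?thesis using Q Y unfolding lt0_def by blast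
qed

theorem lemma2p1:
  fixes C :: "('o, 'm) tcat" and Ale Bge :: "'o set"
  assumes tri: "triangulated C"
    and subA: "Ale \<subseteq> Ob C" and subB: "Bge \<subseteq> Ob C"
    and extA: "\<forall>X' X X'' f g h. (X', X, X'', f, g, h) \<in> dist C \<longrightarrow>
                  X' \<in> Ale \<longrightarrow> X'' \<in> Ale \<longrightarrow> X \<in> Ale"
    and extB: "\<forall>X' X X'' f g h. (X', X, X'', f, g, h) \<in> dist C \<longrightarrow>
                  X' \<in> Bge \<longrightarrow> X'' \<in> Bge \<longrightarrow> X \<in> Bge"
    and M: "(M1, M, M2, f, g, h) \<in> dist C"
    and cases: "(M1 \<in> lt0 C Ale \<and>
                 (\<exists>M2' M2'' a b c. (M2', M2, M2'', a, b, c) \<in> dist C \<and>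
                     M2' \<in> lt0 C Ale \<and> M2'' \<in> Bge))
              \<or> (M2 \<in> Bge \<and>
                 (\<exists>M1' M1'' a b c. (M1', M1, M1'', a, b, c) \<in> dist C \<and>
                     M1' \<in> lt0 C Ale \<and> M1'' \<in> Bge))"
  shows "\<exists>M' M'' a b c. (M', M, M'', a, b, c) \<in> dist C \<and>
           M' \<in> lt0 C Ale \<and> M'' \<in> Bge"
  using cases
proof
  assume "M1 \<in> lt0 C Ale \<and>
                 (\<exists>M2' M2'' a b c. (M2', M2, M2'', a, b, c) \<in> dist C \<and>
                     M2' \<in> lt0 C Ale \<and> M2'' \<in> Bge)"
  then obtain M2' M2'' a b c where M1: "M1 \<in> lt0 C Ale" and d: "(M2', M2, M2'', a, b, c) \<in> dist C"
    and M2': "M2' \<in> lt0 C Ale" and M2'': "M2'' \<in> Bge" by blast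
  have cat: "is_category C" using T_cat[OF tri] .
  have tM: "M1 \<in> Ob C \<and> M \<in> Ob C \<and> M2 \<in> Ob C \<and> f \<in> Hom C M1 M \<and> g \<in> Hom C M M2 \<and> h \<in> Hom C M2 (shO C M1)"
    using T_tri[OF tri M] .
  have td: "M2' \<in> Ob C \<and> M2 \<in> Ob C \<and> M2'' \<in> Ob C \<and> a \<in> Hom C M2' M2 \<and> b \<in> Hom C M2 M2'' \<and> c \<in> Hom C M2'' (shO C M2')"
    using T_tri[OF tri d] .
  have r1: "(M, M2, shO C M1, g, h, neg C (shM C f)) \<in> dist C"
    using T_rot[OF tri] M tM by (simp add: triangle_def)
  have r2: "(M2, M2'', shO C M2', b, c, neg C (shM C a)) \<in> dist C"
    using T_rot[OF tri] d td by (simp add: triangle_def)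
  have bg: "comp C b g \<in> Hom C M M2''" using c_comp[OF cat] tM td by blast
  obtain Y' w l where r3: "(M, M2'', Y', comp C b g, w, l) \<in> dist C" using T_ex[OF tri _ _ bg] tM td by blast
  obtain p q where oc: "(shO C M1, Y', shO C M2', p, q, comp C (shM C h) (neg C (shM C a))) \<in> dist C"
    using T_oct[OF tri _ _ r1 r2 r3] tM td by blast
  have subL: "lt0 C Ale \<subseteq> Ob C" unfolding lt0_def by blast
  have extL: "\<forall>X' X X'' f g h. (X', X, X'', f, g, h) \<in> dist C \<longrightarrow>
                  X' \<in> lt0 C Ale \<longrightarrow> X'' \<in> lt0 C Ale \<longrightarrow> X \<in> lt0 C Ale"
    using lt0_ext[OF tri subA extA] by blast
  have isoid: "iso_mor C (idm C (shO C Z)) (shO C Z) (shO C Z)" if "Z \<in> Ob C" for Z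
  proof -
    have o: "shO C Z \<in> Ob C" using sh_ob[OF T_shift[OF tri] that] .
    show ?thesis using c_id[OF cat o] c_idl[OF cat o o] unfolding iso_mor_def by metis
  qed
  have s1: "shO C M1 \<in> lt0 C (lt0 C Ale)" using isoid[of M1] M1 tM sh_ob[OF T_shift[OF tri], of M1]
    unfolding lt0_def by blast
  have s2: "shO C M2' \<in> lt0 C (lt0 C Ale)" using isoid[of M2'] M2' td sh_ob[OF T_shift[OF tri], of M2']
    unfolding lt0_def by blast
  have "Y' \<in> lt0 C (lt0 C Ale)" using lt0_ext[OF tri subL extL oc s1 s2] .
  then obtain X u where X: "X \<in> lt0 C Ale" "iso_mor C u (shO C X) Y'" unfolding lt0_def by blast
  obtain f0 b0 where "(X, M, M2'', f0, comp C b g, b0) \<in> dist C"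
    using back_rot[OF tri r3 _ X(2)] X(1) subL by blast
  thus ?thesis using X(1) M2'' by blast
next
  assume "M2 \<in> Bge \<and>
                 (\<exists>M1' M1'' a b c. (M1', M1, M1'', a, b, c) \<in> dist C \<and>
                     M1' \<in> lt0 C Ale \<and> M1'' \<in> Bge)"
  then obtain M1' M1'' a b c where M2: "M2 \<in> Bge" and d: "(M1', M1, M1'', a, b, c) \<in> dist C"
    and M1': "M1' \<in> lt0 C Ale" and M1'': "M1'' \<in> Bge" by blast
  have cat: "is_category C" using T_cat[OF tri] .
  have tM: "M1 \<in> Ob C \<and> M \<in> Ob C \<and> M2 \<in> Ob C \<and> f \<in> Hom C M1 M \<and> g \<in> Hom C M M2 \<and> h \<in> Hom C M2 (shO C M1)"
    using T_tri[OF tri M] .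
  have td: "M1' \<in> Ob C \<and> M1 \<in> Ob C \<and> M1'' \<in> Ob C \<and> a \<in> Hom C M1' M1 \<and> b \<in> Hom C M1 M1'' \<and> c \<in> Hom C M1'' (shO C M1')"
    using T_tri[OF tri d] .
  have fa: "comp C f a \<in> Hom C M1' M" using c_comp[OF cat] tM td by blast
  obtain Y' w l where r3: "(M1', M, Y', comp C f a, w, l) \<in> dist C" using T_ex[OF tri _ _ fa] tM td by blast
  obtain p q where oc: "(M1'', Y', M2, p, q, comp C (shM C b) h) \<in> dist C"
    using T_oct[OF tri _ _ d M r3] tM td by blast
  have "Y' \<in> Bge" using extB oc M1'' M2 by blast
  thus ?thesis using r3 M1' by blast
qed

end
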